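(* Let $\mu\in(0,1)$ and let $\beta:[0,\infty)\to(0,\infty)$ be positive, bounded, non-increasing with $\lim_{a\to\infty}a\beta(a)=\mu$. Let $B(a)=\int_0^a\beta(s)\,ds$ and $W(\tau,b)=C(\tau)e^{-B(e^{\tau}b)}(1-b)^{\mu-1}$ for $\tau\ge0$, $b\in[0,1)$, with $C(\tau)>0$ such that $\int_0^1W(\tau,b)\,db=1$. Then for every $\eta$ with $0<\eta<\min(\mu,1-\mu)$ there exists a constant $C_\eta>0$ (depending on $\beta$ but not on $\tau$) such that for all $\tau\ge0$ and $b\in[0,1)$, $$W(\tau,b)\le C_\eta\frac{(1-b)^{\mu-1}(e^{-\tau}+b)^{-(\mu+\eta)}}{\int_b^1(1-b')^{\mu-1}(e^{-\tau}+b')^{-(\mu+\eta)}db'}.$$ *)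

theory Defs
  imports "HOL-Analysis.Analysis"
begin

definition Bint :: "(real \<Rightarrow> real) \<Rightarrow> real \<Rightarrow> real" where
  "Bint \<beta> a = integral {0..a} \<beta>"

definition Wfun :: "(real \<Rightarrow> real) \<Rightarrow> real \<Rightarrow> (real \<Rightarrow> real) \<Rightarrow> real \<Rightarrow> real \<Rightarrow> real" where
  "Wfun \<beta> \<mu> C \<tau> b = C \<tau> * exp (- Bint \<beta> (exp \<tau> * b)) * (1 - b) powr (\<mu> - 1)"

end

theory Submission
  imports Defs
begin

lemma hi_Ico_Icc:
  fixes f :: "real \<Rightarrow> real"
  shows "(f has_integral y) {a..<b} \<longleftrightarrow> (f has_integral y) {a..b}"
  by (rule has_integral_spike_set_eq; rule negligible_subset[of "{b}"]) auto

lemma int_Ico_Ioo: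
  fixes f :: "real \<Rightarrow> real"
  shows "integral {a..<b} f = integral {a<..<b} f"
  by (rule integral_spike_set; rule negligible_subset[of "{a}"]) auto

lemma g_bounds:
  fixes \<mu> p \<epsilon> b :: real
  assumes mu: "0 < \<mu>" "\<mu> < 1" and p: "0 < p" "p < 1" and eps: "0 < \<epsilon>" "\<epsilon> \<le> 1" and b: "0 \<le> b" "b < 1"
  shows "0 < integral {b..<1} (\<lambda>x. (1 - x) powr (\<mu> - 1) * (\<epsilon> + x) powr (-p))
     \<and> integral {b..<1} (\<lambda>x. (1 - x) powr (\<mu> - 1) * (\<epsilon> + x) powr (-p)) \<le> Beta (1 - p) \<mu>"
proof -
  define g where "g = (\<lambda>x::real. (1 - x) powr (\<mu> - 1) * (\<epsilon> + x) powr (-p))"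
  define h where "h = (\<lambda>t::real. t powr (-p) * (1 - t) powr (\<mu> - 1))"
  have "((\<lambda>t. t powr ((1 - p) - 1) * (1 - t) powr (\<mu> - 1)) has_integral Beta (1-p) \<mu>) {0..1}"
    by (rule has_integral_Beta_real) (use p mu in auto)
  then have hB: "(h has_integral Beta (1-p) \<mu>) {0..1}" unfolding h_def by simp
  have h0: "\<And>x. 0 \<le> h x" unfolding h_def by simp
  have hint: "h integrable_on {b..1}"
    by (rule integrable_subinterval_real[of _ 0 1]) (use hB b in auto)
  then have hint': "h integrable_on {b<..<1}" using integrable_on_Icc_iff_Ioo by blast
  have cont: "continuous_on {b<..<1} g" unfolding g_def
    using eps b by (intro continuous_intros) auto
  have meas: "g \<in> borel_measurable (lebesgue_on {b<..<1})"
    by (rule continuous_imp_measurable_on_sets_lebesgue[OF cont]) auto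
  have gh: "\<bar>g x\<bar> \<le> h x" if x: "x \<in> {b<..<1}" for x
  proof -
    have "(\<epsilon> + x) powr (-p) \<le> x powr (-p)"
      using x b eps p by (intro powr_mono2') auto
    then have "(1 - x) powr (\<mu> - 1) * (\<epsilon> + x) powr (-p) \<le> (1 - x) powr (\<mu> - 1) * x powr (-p)"
      by (intro mult_left_mono) auto
    then show ?thesis unfolding g_def h_def by (simp add: mult.commute)
  qed
  have gint: "g integrable_on {b<..<1}"
    by (rule measurable_bounded_by_integrable_imp_integrable_real[OF meas hint' gh]) auto
  have "integral {b<..<1} g \<le> integral {b<..<1} h"
    by (rule integral_le[OF gint hint']) (use gh in force)
  also have "\<dots> = integral {b..1} h" by (simp add: integral_open_interval_real)
  also have "\<dots> \<le> Beta (1 - p) \<mu>"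
    by (rule has_integral_subset_le[OF _ integrable_integral[OF hint] hB]) (use b h0 in auto)
  finally have up: "integral {b<..<1} g \<le> Beta (1 - p) \<mu>" .
  have lowpt: "2 powr (-p) \<le> g x" if x: "x \<in> {b<..<1}" for x
  proof -
    have a: "1 \<le> (1 - x) powr (\<mu> - 1)"
      using powr_mono2'[of "\<mu> - 1" "1 - x" 1] x b mu by force
    have c: "2 powr (-p) \<le> (\<epsilon> + x) powr (-p)"
      using x b eps p by (intro powr_mono2') auto
    have "1 * 2 powr (-p) \<le> (1 - x) powr (\<mu> - 1) * (\<epsilon> + x) powr (-p)"
      by (rule mult_mono[OF a c]) auto
    then show ?thesis unfolding g_def by simp
  qed
  have cint: "(\<lambda>x. 2 powr (-p)) integrable_on {b<..<1}"
    using integrable_on_Icc_iff_Ioo[of "\<lambda>x. 2 powr (-p)" b 1] by auto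
  have "(1 - b) * 2 powr (-p) = integral {b<..<1} (\<lambda>x. 2 powr (-p))"
    using b by (simp add: integral_open_interval_real[symmetric])
  also have "\<dots> \<le> integral {b<..<1} g"
    by (rule integral_le[OF cint gint lowpt])
  finally have low: "0 < integral {b<..<1} g"
    using b by (smt (verit) mult_pos_pos powr_gt_zero)
  show ?thesis using up low unfolding g_def int_Ico_Ioo by auto
qed

lemma B_split:
  fixes \<beta> :: "real \<Rightarrow> real"
  assumes noninc: "\<And>x y. 0 \<le> x \<Longrightarrow> x \<le> y \<Longrightarrow> \<beta> y \<le> \<beta> x"
    and x: "0 \<le> x" "x \<le> y"
  shows "\<beta> integrable_on {x..y}" "Bint \<beta> y - Bint \<beta> x = integral {x..y} \<beta>"
proof -
  have int: "\<beta> integrable_on {u..v}" if "0 \<le> u" for u v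
  proof -
    have "mono_on {u..v} (\<lambda>s. - \<beta> s)"
      using noninc that by (auto simp: mono_on_def)
    then have "(\<lambda>s. - \<beta> s) integrable_on {u..v}" by (rule integrable_on_mono_on)
    then show ?thesis by (simp add: integrable_neg_iff)
  qed
  show "\<beta> integrable_on {x..y}" using int x by auto
  have "integral {0..x} \<beta> + integral {x..y} \<beta> = integral {0..y} \<beta>"
    by (rule Henstock_Kurzweil_Integration.integral_combine) (use x int in auto)
  then show "Bint \<beta> y - Bint \<beta> x = integral {x..y} \<beta>" unfolding Bint_def by simp
qed

lemma int_inv:
  fixes p u v :: real
  assumes "0 \<le> u" "u \<le> v"
  shows "((\<lambda>s. p / (s + 1)) has_integral (p * ln (v + 1) - p * ln (u + 1))) {u..v}"
proof -
  have "((\<lambda>s. p / (s + 1)) has_integral ((\<lambda>s. p * ln (s + 1)) v - (\<lambda>s. p * ln (s + 1)) u)) {u..v}"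
  proof (rule fundamental_theorem_of_calculus)
    fix s assume s: "s \<in> {u..v}"
    have "((\<lambda>s. p * ln (s + 1)) has_real_derivative p * (1 / (s + 1))) (at s within {u..v})"
      using s assms by (auto intro!: derivative_eq_intros)
    then show "((\<lambda>s. p * ln (s + 1)) has_vector_derivative p / (s + 1)) (at s within {u..v})"
      by (simp add: has_real_derivative_iff_has_vector_derivative)
  qed (use assms in auto)
  then show ?thesis by simp
qed

lemma beta_int_bound:
  fixes \<beta> :: "real \<Rightarrow> real"
  assumes noninc: "\<And>x y. 0 \<le> x \<Longrightarrow> x \<le> y \<Longrightarrow> \<beta> y \<le> \<beta> x"
    and M: "\<And>a. 0 \<le> a \<Longrightarrow> \<beta> a \<le> M"
    and A0: "0 \<le> A"
    and A: "\<And>s. A \<le> s \<Longrightarrow> \<beta> s \<le> p / (s + 1)"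
    and M0: "0 \<le> M" and p0: "0 \<le> p"
    and x: "0 \<le> x" "x \<le> y"
  shows "integral {x..y} \<beta> \<le> M * A + (p * ln (y + 1) - p * ln (x + 1))"
proof -
  have bi: "\<And>u v. 0 \<le> u \<Longrightarrow> u \<le> v \<Longrightarrow> \<beta> integrable_on {u..v}"
    using B_split(1)[of \<beta>, OF noninc] by blast
  have lnmono: "\<And>u v. 0 \<le> u \<Longrightarrow> u \<le> v \<Longrightarrow> p * ln (u + 1) \<le> p * ln (v + 1)"
    using p0 by (intro mult_left_mono) auto
  have tail: "integral {u..v} \<beta> \<le> p * ln (v + 1) - p * ln (u + 1)" if "A \<le> u" "u \<le> v" for u v
  proof -
    have "integral {u..v} \<beta> \<le> integral {u..v} (\<lambda>s. p / (s + 1))"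
      using that A0 A by (intro integral_le bi has_integral_integrable[OF int_inv]) auto
    also have "\<dots> = p * ln (v + 1) - p * ln (u + 1)"
      using that A0 by (intro integral_unique int_inv) auto
    finally show ?thesis .
  qed
  have head: "integral {u..v} \<beta> \<le> M * (v - u)" if "0 \<le> u" "u \<le> v" for u v
  proof -
    have "integral {u..v} \<beta> \<le> integral {u..v} (\<lambda>s. M)"
      using that M by (intro integral_le bi) auto
    then show ?thesis using that by (simp add: mult.commute)
  qed
  show ?thesis
  proof (cases "A \<le> x")
    case True
    have "0 \<le> M * A" using M0 A0 by simp
    then show ?thesis using tail[OF True x(2)] by linarith
  next
    case False
    show ?thesis
    proof (cases "y \<le> A")
      case True
      have "M * (y - x) \<le> M * A" using M0 x True by (intro mult_left_mono) auto
      then show ?thesis using head[OF x] lnmono[OF x] by linarith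
    next
      case yA: False
      have "integral {x..A} \<beta> + integral {A..y} \<beta> = integral {x..y} \<beta>"
        using False yA x by (intro Henstock_Kurzweil_Integration.integral_combine bi) auto
      moreover have "M * (A - x) \<le> M * A" using M0 x by (intro mult_left_mono) auto
      moreover note head[of x A] tail[of A y] lnmono[of x A]
      ultimately show ?thesis using False yA x by linarith
    qed
  qed
qed

theorem lemma2:
  fixes \<beta> C :: "real \<Rightarrow> real" and \<mu> :: real
  assumes mu: "0 < \<mu>" "\<mu> < 1"
    and pos: "\<And>a. 0 \<le> a \<Longrightarrow> 0 < \<beta> a"
    and bdd: "\<exists>M. \<forall>a\<ge>0. \<beta> a \<le> M"
    and noninc: "\<And>x y. 0 \<le> x \<Longrightarrow> x \<le> y \<Longrightarrow> \<beta> y \<le> \<beta> x"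
    and lim: "((\<lambda>a. a * \<beta> a) \<longlongrightarrow> \<mu>) at_top"
    and Cpos: "\<And>\<tau>. 0 \<le> \<tau> \<Longrightarrow> 0 < C \<tau>"
    and Cnorm: "\<And>\<tau>. 0 \<le> \<tau> \<Longrightarrow> (Wfun \<beta> \<mu> C \<tau> has_integral 1) {0..<1}"
  shows "\<forall>\<eta>. 0 < \<eta> \<and> \<eta> < min \<mu> (1 - \<mu>) \<longrightarrow>
     (\<exists>C\<^sub>\<eta> > 0. \<forall>\<tau> \<ge> 0. \<forall>b \<in> {0..<1}.
        Wfun \<beta> \<mu> C \<tau> b \<le> C\<^sub>\<eta> * ((1 - b) powr (\<mu> - 1) * (exp (-\<tau>) + b) powr (-(\<mu> + \<eta>)))
          / integral {b..<1} (\<lambda>b'. (1 - b') powr (\<mu> - 1) * (exp (-\<tau>) + b') powr (-(\<mu> + \<eta>))))"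
proof (intro allI impI)
  fix \<eta> :: real
  assume eta: "0 < \<eta> \<and> \<eta> < min \<mu> (1 - \<mu>)"
  define p where "p = \<mu> + \<eta>"
  have p: "0 < p" "p < 1" using eta mu unfolding p_def by auto
  obtain M where M: "\<And>a. 0 \<le> a \<Longrightarrow> \<beta> a \<le> M" using bdd by auto
  have M0: "0 \<le> M" using M[of 0] pos[of 0] by auto
  define K where "K = (2 * \<mu> + \<eta>) / \<eta>"
  have K0: "0 < K" using eta mu unfolding K_def by auto
  have ev: "eventually (\<lambda>s. s * \<beta> s < \<mu> + \<eta> / 2 \<and> K \<le> s) at_top"
    using order_tendstoD(2)[OF lim, of "\<mu> + \<eta>/2"] eta eventually_ge_at_top[of K]
    by (auto intro: eventually_conj)
  then obtain A1 where A1: "\<And>s. A1 \<le> s \<Longrightarrow> s * \<beta> s < \<mu> + \<eta> / 2 \<and> K \<le> s"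
    by (auto simp: eventually_at_top_linorder)
  define A where "A = max A1 0"
  have A0: "0 \<le> A" unfolding A_def by simp
  have Abound: "\<beta> s \<le> p / (s + 1)" if s: "A \<le> s" for s
  proof -
    have s1: "s * \<beta> s < \<mu> + \<eta> / 2" "K \<le> s" using A1[of s] s unfolding A_def by auto
    have s0: "0 < s" using s1(2) K0 by linarith
    have bp: "0 < \<beta> s" using pos s0 by auto
    have "\<beta> s * K \<le> \<beta> s * s" using s1(2) bp by (intro mult_left_mono) auto
    then have "\<beta> s * K < \<mu> + \<eta> / 2" using s1(1) by (simp add: mult.commute)
    also have "\<mu> + \<eta> / 2 = (\<eta> / 2) * K" using eta unfolding K_def by (simp add: field_simps)
    finally have "\<beta> s * K < (\<eta> / 2) * K" .
    then have bh: "\<beta> s < \<eta> / 2" using K0 by (simp add: mult_less_cancel_right)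
    have "(s + 1) * \<beta> s = s * \<beta> s + \<beta> s" by (simp add: algebra_simps)
    then have "(s + 1) * \<beta> s < p" using s1(1) bh unfolding p_def by linarith
    then show ?thesis using s0 by (simp add: pos_le_divide_eq mult.commute)
  qed
  have Bdiff: "Bint \<beta> y - Bint \<beta> x \<le> M * A + (p * ln (y + 1) - p * ln (x + 1))"
    if "0 \<le> x" "x \<le> y" for x y
    using B_split(2)[of \<beta>, OF noninc that] beta_int_bound[of \<beta>, OF noninc M A0 Abound M0 _ that] p by auto
  have Bmono: "Bint \<beta> x \<le> Bint \<beta> y" if "0 \<le> x" "x \<le> y" for x y
  proof -
    have "0 \<le> integral {x..y} \<beta>"
      using that pos by (intro integral_nonneg B_split(1)[of \<beta>, OF noninc]) (auto intro: less_imp_le)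
    then show ?thesis using B_split(2)[of \<beta>, OF noninc that] by simp
  qed
  define K1 where "K1 = Beta (1 - p) \<mu>"
  define K0' where "K0' = exp (M * A) * 2 powr p"
  have K0'pos: "0 < K0'" unfolding K0'_def by simp
  define I where "I = (\<lambda>\<tau> b. integral {b..<1} (\<lambda>b'. (1 - b') powr (\<mu> - 1) * (exp (-\<tau>) + b') powr (-(\<mu> + \<eta>))))"
  have Ib: "0 < I \<tau> b \<and> I \<tau> b \<le> K1" if "0 \<le> \<tau>" "0 \<le> b" "b < 1" for \<tau> b
    unfolding I_def K1_def p_def using g_bounds[of \<mu> p "exp (-\<tau>)" b] mu p that
    unfolding p_def by auto
  have K1pos: "0 < K1" using Ib[of 0 0] by auto
  have Cb: "C \<tau> \<le> exp (Bint \<beta> (exp \<tau>))" if t: "0 \<le> \<tau>" for \<tau>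
  proof -
    define c where "c = C \<tau> * exp (- Bint \<beta> (exp \<tau>))"
    have ci: "((\<lambda>x::real. c) has_integral c) {0..<1}"
      proof -
      have "((\<lambda>x::real. c) has_integral c) {0..1}"
        using has_integral_const_real[of c 0 1] by simp
      then show ?thesis by (rule hi_Ico_Icc[THEN iffD2])
    qed
    have le: "c \<le> Wfun \<beta> \<mu> C \<tau> x" if x: "x \<in> {0..<1}" for x
    proof -
      have "Bint \<beta> (exp \<tau> * x) \<le> Bint \<beta> (exp \<tau>)"
        using x by (intro Bmono) (auto simp: mult_le_cancel_left1)
      then have e: "exp (- Bint \<beta> (exp \<tau>)) \<le> exp (- Bint \<beta> (exp \<tau> * x))" by simp
      have a: "1 \<le> (1 - x) powr (\<mu> - 1)"
        using powr_mono2'[of "\<mu> - 1" "1 - x" 1] x mu by force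
      have "C \<tau> * exp (- Bint \<beta> (exp \<tau>)) * 1 \<le> C \<tau> * exp (- Bint \<beta> (exp \<tau> * x)) * (1 - x) powr (\<mu> - 1)"
        using Cpos[OF t] e a by (intro mult_mono) auto
      then show ?thesis unfolding c_def Wfun_def by simp
    qed
    have "c \<le> 1" by (rule has_integral_le[OF ci Cnorm[OF t] le])
    have "C \<tau> = c * exp (Bint \<beta> (exp \<tau>))" unfolding c_def by (simp add: mult.assoc exp_add[symmetric])
    also have "\<dots> \<le> 1 * exp (Bint \<beta> (exp \<tau>))" using \<open>c \<le> 1\<close> by (intro mult_right_mono) auto
    finally show ?thesis by simp
  qed
  show "\<exists>C\<^sub>\<eta> > 0. \<forall>\<tau> \<ge> 0. \<forall>b \<in> {0..<1}.
        Wfun \<beta> \<mu> C \<tau> b \<le> C\<^sub>\<eta> * ((1 - b) powr (\<mu> - 1) * (exp (-\<tau>) + b) powr (-(\<mu> + \<eta>)))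
          / integral {b..<1} (\<lambda>b'. (1 - b') powr (\<mu> - 1) * (exp (-\<tau>) + b') powr (-(\<mu> + \<eta>)))"
  proof (intro exI[of _ "K0' * K1"] conjI allI impI ballI)
    show "0 < K0' * K1" using K0'pos K1pos by simp
    fix \<tau> b :: real
    assume t: "0 \<le> \<tau>" and b: "b \<in> {0..<1}"
    define \<epsilon> where "\<epsilon> = exp (-\<tau>)"
    define q where "q = (1 - b) powr (\<mu> - 1)"
    define f where "f = q * (\<epsilon> + b) powr (-p)"
    have q0: "0 \<le> q" unfolding q_def by simp
    have eps: "0 < \<epsilon>" "\<epsilon> \<le> 1" unfolding \<epsilon>_def using t by auto
    have epb: "0 < \<epsilon> + b" using eps b by auto
    define x where "x = exp \<tau> * b"
    define y where "y = exp \<tau>"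
    have xy: "0 \<le> x" "x \<le> y" unfolding x_def y_def using b by (auto simp: mult_le_cancel_left1)
    have ratio: "(y + 1) / (x + 1) = (1 + \<epsilon>) / (\<epsilon> + b)"
    proof -
      have ey: "\<epsilon> * y = 1" unfolding \<epsilon>_def y_def by (simp add: exp_minus)
      have "(y + 1) / (x + 1) = (\<epsilon> * (y + 1)) / (\<epsilon> * (x + 1))"
        using eps xy by simp
      also have "\<dots> = (1 + \<epsilon>) / (\<epsilon> + b)"
        using ey unfolding x_def y_def by (simp add: algebra_simps)
      finally show ?thesis .
    qed
    have "Bint \<beta> y - Bint \<beta> x \<le> M * A + p * ln ((y + 1) / (x + 1))"
      using Bdiff[OF xy] xy by (simp add: ln_div right_diff_distrib)
    then have "exp (Bint \<beta> y - Bint \<beta> x) \<le> exp (M * A) * exp (p * ln ((y + 1) / (x + 1)))"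
      by (simp add: exp_add[symmetric])
    also have "exp (p * ln ((y + 1) / (x + 1))) = ((y + 1) / (x + 1)) powr p"
      using xy by (simp add: powr_def mult.commute)
    also have "\<dots> \<le> (2 / (\<epsilon> + b)) powr p"
      unfolding ratio using eps epb p by (intro powr_mono2 divide_right_mono) auto
    also have "\<dots> = 2 powr p * (\<epsilon> + b) powr (-p)"
      using epb by (subst powr_divide) (auto simp: powr_minus divide_inverse)
    finally have E: "exp (Bint \<beta> y - Bint \<beta> x) \<le> K0' * (\<epsilon> + b) powr (-p)"
      unfolding K0'_def by (simp add: mult.assoc)
    have "Wfun \<beta> \<mu> C \<tau> b = C \<tau> * exp (- Bint \<beta> x) * q"
      unfolding Wfun_def x_def q_def by simp
    also have "\<dots> \<le> exp (Bint \<beta> y) * exp (- Bint \<beta> x) * q"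
      using Cb[OF t] q0 unfolding y_def by (intro mult_right_mono) auto
    also have "\<dots> = exp (Bint \<beta> y - Bint \<beta> x) * q" by (simp add: exp_diff exp_minus divide_inverse)
    also have "\<dots> \<le> K0' * (\<epsilon> + b) powr (-p) * q"
      using E q0 by (intro mult_right_mono) auto
    also have "\<dots> = K0' * f" unfolding f_def by simp
    finally have W: "Wfun \<beta> \<mu> C \<tau> b \<le> K0' * f" .
    have f0: "0 \<le> f" unfolding f_def using q0 by simp
    have I: "0 < I \<tau> b" "I \<tau> b \<le> K1" using Ib[OF t] b by auto
    have "K0' * f = (K0' * K1 * f) / K1" using K1pos by simp
    also have "\<dots> \<le> (K0' * K1 * f) / I \<tau> b"
      using I K0'pos K1pos f0 by (intro divide_left_mono) auto
    finally have "Wfun \<beta> \<mu> C \<tau> b \<le> (K0' * K1 * f) / I \<tau> b" using W by linarith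
    then show "Wfun \<beta> \<mu> C \<tau> b \<le> K0' * K1 * ((1 - b) powr (\<mu> - 1) * (exp (-\<tau>) + b) powr (-(\<mu> + \<eta>)))
          / integral {b..<1} (\<lambda>b'. (1 - b') powr (\<mu> - 1) * (exp (-\<tau>) + b') powr (-(\<mu> + \<eta>)))"
      unfolding I_def f_def q_def \<epsilon>_def p_def by (simp add: mult.assoc)
  qed
qed

end
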